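(* Let $x_1\le x_2\le\dots\le x_n$ and $y_1\le y_2\le\dots\le y_n$ be real numbers. Set $\mu=\frac1n\sum_{i=1}^n\delta_{x_i}$ and $\nu=\frac1n\sum_{i=1}^n\delta_{y_i}$, and let $\theta$ be a strictly convex cost function. The following are equivalent: (i) the map $i\mapsto x_i-y_i$ is non-decreasing; (ii) $\overline{\mathcal{T}}_\theta(\nu|\mu)=\mathcal{T}_\theta(\nu,\mu)$.
   Context: A cost function is an even convex function $\theta:\mathbb{R}\to[0,\infty)$ with $\theta(0)=0$. The weak transport cost is $$\overline{\mathcal{T}}_\theta(\nu|\mu)=\inf_\pi\int\theta\big(|x-\textstyle\int y\,p(x,dy)|\big)\,\mu(dx),$$ with the infimum over couplings $\pi(dx\,dy)=\mu(dx)p(x,dy)$ with marginals $\mu$ and $\nu$. The classical transport cost is $\mathcal{T}_\theta(\nu,\mu)=\inf_\pi\int\theta(|x-y|)\,d\pi$. *)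

theory Defs
  imports "HOL-Analysis.Analysis" "HOL-Probability.Probability"
begin

definition cost_function :: "(real \<Rightarrow> real) \<Rightarrow> bool" where
  "cost_function \<theta> \<longleftrightarrow> convex_on UNIV \<theta> \<and> (\<forall>x. \<theta> (- x) = \<theta> x)
     \<and> (\<forall>x. 0 \<le> \<theta> x) \<and> \<theta> 0 = 0"

definition strictly_convex :: "(real \<Rightarrow> real) \<Rightarrow> bool" where
  "strictly_convex \<theta> \<longleftrightarrow> (\<forall>x y t. x \<noteq> y \<longrightarrow> 0 < t \<longrightarrow> t < 1 \<longrightarrow>
      \<theta> ((1 - t) * x + t * y) < (1 - t) * \<theta> x + t * \<theta> y)"

definition empirical :: "nat \<Rightarrow> (nat \<Rightarrow> real) \<Rightarrow> real pmf" where
  "empirical n x = map_pmf x (pmf_of_set {..<n})"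

definition couplings :: "real pmf \<Rightarrow> real pmf \<Rightarrow> (real \<times> real) pmf set" where
  "couplings \<mu> \<nu> = {\<pi>. map_pmf fst \<pi> = \<mu> \<and> map_pmf snd \<pi> = \<nu>}"

text \<open>Barycenter int y p(x,dy) of the disintegration kernel of pi at x
  (pi(dx dy) = mu(dx) p(x,dy), mu the first marginal).\<close>
definition kernel_bary :: "(real \<times> real) pmf \<Rightarrow> real \<Rightarrow> real" where
  "kernel_bary \<pi> x =
     measure_pmf.expectation \<pi> (\<lambda>(a, b). if a = x then b else 0) / pmf (map_pmf fst \<pi>) x"

definition weak_cost :: "(real \<Rightarrow> real) \<Rightarrow> real pmf \<Rightarrow> real pmf \<Rightarrow> real" where
  "weak_cost \<theta> \<nu> \<mu> =
     Inf ((\<lambda>\<pi>. measure_pmf.expectation \<mu> (\<lambda>x. \<theta> \<bar>x - kernel_bary \<pi> x\<bar>)) ` couplings \<mu> \<nu>)"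

definition transport_cost :: "(real \<Rightarrow> real) \<Rightarrow> real pmf \<Rightarrow> real pmf \<Rightarrow> real" where
  "transport_cost \<theta> \<nu> \<mu> =
     Inf ((\<lambda>\<pi>. measure_pmf.expectation \<pi> (\<lambda>(x, y). \<theta> \<bar>x - y\<bar>)) ` couplings \<mu> \<nu>)"

end

theory Submission
  imports Defs
begin


lemma subgrad_ex:
  fixes f :: "real \<Rightarrow> real"
  assumes "convex_on UNIV f"
  shows "\<exists>g. \<forall>t. f m + g * (t - m) \<le> f t"
proof -
  define S where "S = {(f m - f s) / (m - s) | s. s < m}"
  have ne: "S \<noteq> {}" unfolding S_def by (auto intro: exI[of _ "m-1"])
  have up: "\<And>v t. v \<in> S \<Longrightarrow> m < t \<Longrightarrow> v \<le> (f t - f m) / (t - m)"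
  proof -
    fix v t assume "v \<in> S" "m < t"
    then obtain s where s: "s < m" "v = (f m - f s) / (m - s)" unfolding S_def by auto
    have "(f s - f m) / (s - m) \<le> (f s - f t) / (s - t)"
         "(f s - f t) / (s - t) \<le> (f m - f t) / (m - t)"
      using convex_on_slope_le[OF assms, of s t m] s \<open>m<t\<close> by auto
    moreover have "(f s - f m) / (s - m) = v"
      using s by (auto simp: field_simps)
    moreover have "(f m - f t) / (m - t) = (f t - f m) / (t - m)"
      by (metis minus_diff_eq minus_divide_divide)
    ultimately show "v \<le> (f t - f m) / (t - m)" by linarith
  qed
  have bdd: "bdd_above S" using up[of _ "m+1"] by (intro bdd_aboveI[where M="f (m+1) - f m"]) auto
  show ?thesis
  proof (intro exI allI)
    fix t
    show "f m + Sup S * (t - m) \<le> f t"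
    proof (cases "t = m")
      case True then show ?thesis by simp
    next
      case False
      show ?thesis
      proof (cases "m < t")
        case True
        have "Sup S \<le> (f t - f m) / (t - m)" by (rule cSup_least[OF ne]) (use up True in auto)
        then have "Sup S * (t - m) \<le> f t - f m" using True by (simp add: pos_le_divide_eq)
        then show ?thesis by simp
      next
        case f: False
        with False have "t < m" by simp
        have "(f m - f t) / (m - t) \<le> Sup S"
          by (rule cSup_upper[OF _ bdd]) (use \<open>t<m\<close> in \<open>auto simp: S_def\<close>)
        then have "f m - f t \<le> Sup S * (m - t)" using \<open>t<m\<close> by (simp add: pos_divide_le_eq)
        then show ?thesis by (simp add: algebra_simps)
      qed
    qed
  qed
qed

lemma fin_exp:
  assumes "finite (set_pmf M)"
  shows "measure_pmf.expectation M (f :: 'a \<Rightarrow> real) = (\<Sum>a\<in>set_pmf M. f a * pmf M a)"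
  by (rule integral_measure_pmf_real) (use assms in auto)

lemma sum_group_fst:
  fixes h :: "'a \<Rightarrow> real" and w :: "'a \<times> 'b \<Rightarrow> real"
  assumes "finite S"
  shows "(\<Sum>p\<in>S. h (fst p) * w p) = (\<Sum>a\<in>fst`S. h a * (\<Sum>p\<in>S. if fst p = a then w p else 0))"
proof -
  have "(\<Sum>a\<in>fst`S. h a * (\<Sum>p\<in>S. if fst p = a then w p else 0))
      = (\<Sum>a\<in>fst`S. \<Sum>p\<in>S. if fst p = a then h (fst p) * w p else 0)"
  proof (rule sum.cong[OF refl])
    fix a
    have "h a * (\<Sum>p\<in>S. if fst p = a then w p else 0) = (\<Sum>p\<in>S. h a * (if fst p = a then w p else 0))"
      by (simp add: sum_distrib_left)
    also have "\<dots> = (\<Sum>p\<in>S. if fst p = a then h (fst p) * w p else 0)"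
      by (rule sum.cong) auto
    finally show "h a * (\<Sum>p\<in>S. if fst p = a then w p else 0) = (\<Sum>p\<in>S. if fst p = a then h (fst p) * w p else 0)" .
  qed
  also have "\<dots> = (\<Sum>p\<in>S. \<Sum>a\<in>fst`S. if fst p = a then h (fst p) * w p else 0)"
    by (rule sum.swap)
  also have "\<dots> = (\<Sum>p\<in>S. h (fst p) * w p)"
    using assms by (auto intro!: sum.cong simp: sum.delta')
  finally show ?thesis by simp
qed

lemma key_identity:
  fixes \<pi> :: "(real \<times> real) pmf"
  assumes fin: "finite (set_pmf \<pi>)"
  shows "measure_pmf.expectation (map_pmf fst \<pi>) (\<lambda>a. \<beta> a * kernel_bary \<pi> a)
       = measure_pmf.expectation \<pi> (\<lambda>p. \<beta> (fst p) * snd p)"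
proof -
  define S where "S = set_pmf \<pi>"
  define N where "N a = (\<Sum>p\<in>S. (if fst p = a then snd p else 0) * pmf \<pi> p)" for a
  define D where "D a = (\<Sum>p\<in>S. if fst p = a then pmf \<pi> p else 0)" for a
  have finS: "finite S" using fin S_def by simp
  have N: "measure_pmf.expectation \<pi> (\<lambda>(a', b). if a' = a then b else 0) = N a" for a
    unfolding N_def S_def by (subst fin_exp[OF fin]) (auto intro!: sum.cong split: prod.splits)
  have D: "pmf (map_pmf fst \<pi>) a = D a" for a
  proof -
    have "pmf (map_pmf fst \<pi>) a = measure \<pi> (fst -` {a})" by (rule pmf_map)
    also have "\<dots> = measure_pmf.expectation \<pi> (indicator (fst -` {a}))"
      by (simp add: measure_pmf.emeasure_eq_measure)
    also have "\<dots> = D a" unfolding D_def S_def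
      by (subst fin_exp[OF fin]) (auto intro!: sum.cong simp: indicator_def)
    finally show ?thesis .
  qed
  have Dpos: "a \<in> fst ` S \<Longrightarrow> D a > 0" for a
    using D[of a] pmf_positive[of a "map_pmf fst \<pi>"] by (simp add: S_def)
  have "measure_pmf.expectation (map_pmf fst \<pi>) (\<lambda>a. \<beta> a * kernel_bary \<pi> a)
      = measure_pmf.expectation \<pi> (\<lambda>p. \<beta> (fst p) * kernel_bary \<pi> (fst p))" by simp
  also have "\<dots> = (\<Sum>p\<in>S. (\<beta> (fst p) * kernel_bary \<pi> (fst p)) * pmf \<pi> p)"
    unfolding S_def by (rule fin_exp[OF fin])
  also have "\<dots> = (\<Sum>a\<in>fst`S. (\<beta> a * kernel_bary \<pi> a) * D a)"
    unfolding D_def by (rule sum_group_fst[OF finS])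
  also have "\<dots> = (\<Sum>a\<in>fst`S. \<beta> a * N a)"
  proof (rule sum.cong[OF refl])
    fix a assume "a \<in> fst ` S"
    then have "D a > 0" by (rule Dpos)
    then show "(\<beta> a * kernel_bary \<pi> a) * D a = \<beta> a * N a"
      by (simp add: kernel_bary_def N D)
  qed
  also have "\<dots> = (\<Sum>p\<in>S. \<beta> (fst p) * (snd p * pmf \<pi> p))"
    by (subst sum_group_fst[OF finS]) (auto simp: N_def intro!: sum.cong arg_cong2[where f="(*)"])
  also have "\<dots> = measure_pmf.expectation \<pi> (\<lambda>p. \<beta> (fst p) * snd p)"
    unfolding S_def by (subst fin_exp[OF fin]) (simp add: mult.assoc)
  finally show ?thesis .
qed



locale TT =
  fixes n :: nat and x y :: "nat \<Rightarrow> real" and \<theta> :: "real \<Rightarrow> real"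
  assumes n1: "n \<ge> 1"
    and xm: "\<And>i j. i \<le> j \<Longrightarrow> j < n \<Longrightarrow> x i \<le> x j"
    and ym: "\<And>i j. i \<le> j \<Longrightarrow> j < n \<Longrightarrow> y i \<le> y j"
    and cf: "cost_function \<theta>" and sc: "strictly_convex \<theta>"
begin

definition "U = pmf_of_set {..<n}"
definition "C = (\<Sum>k<n. \<theta> (x k - y k)) / n"
definition "G m = (SOME g. \<forall>t. \<theta> m + g * (t - m) \<le> \<theta> t)" for m

lemma cvx: "convex_on UNIV \<theta>" using cf by (simp add: cost_function_def)

lemma th_abs[simp]: "\<theta> \<bar>t\<bar> = \<theta> t"
  using cf by (cases "t \<ge> 0") (auto simp: cost_function_def)

lemma th_nonneg: "0 \<le> \<theta> t" using cf by (simp add: cost_function_def)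

lemma G_sub: "\<theta> m + G m * (t - m) \<le> \<theta> t"
proof -
  have "\<exists>g. \<forall>t. \<theta> m + g * (t - m) \<le> \<theta> t" by (rule subgrad_ex[OF cvx])
  then have "\<forall>t. \<theta> m + G m * (t - m) \<le> \<theta> t" unfolding G_def by (rule someI_ex)
  then show ?thesis by blast
qed

lemma G_mono: assumes "u \<le> v" shows "G u \<le> G v"
proof (cases "u = v")
  case False
  with assms have "u < v" by simp
  have "\<theta> u + G u * (v - u) \<le> \<theta> v" "\<theta> v + G v * (u - v) \<le> \<theta> u" by (rule G_sub)+
  then have "G u * (v - u) \<le> G v * (v - u)" by (simp add: algebra_simps)
  then show ?thesis using \<open>u < v\<close> by simp
qed simp

lemma submod:
  assumes "x1 \<le> x2" "y1 \<le> y2"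
  shows "\<theta> (x1 - y1) + \<theta> (x2 - y2) \<le> \<theta> (x1 - y2) + \<theta> (x2 - y1)"
proof -
  define p where "p = x1 - y1"
  define q where "q = x2 - y2"
  have a: "\<theta> p + G p * ((x2 - y1) - p) \<le> \<theta> (x2 - y1)" by (rule G_sub)
  have b: "\<theta> q + G q * ((x1 - y2) - q) \<le> \<theta> (x1 - y2)" by (rule G_sub)
  have c: "\<theta> q + G q * ((x2 - y1) - q) \<le> \<theta> (x2 - y1)" by (rule G_sub)
  have d: "\<theta> p + G p * ((x1 - y2) - p) \<le> \<theta> (x1 - y2)" by (rule G_sub)
  show ?thesis
  proof (cases "G p \<ge> G q")
    case True
    have "0 \<le> (G p - G q) * (x2 - x1)" using True assms by simp
    then show ?thesis using a b unfolding p_def q_def by (simp add: algebra_simps)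
  next
    case False
    have "0 \<le> (G q - G p) * (y2 - y1)" using False assms by simp
    then show ?thesis using c d unfolding p_def q_def by (simp add: algebra_simps)
  qed
qed

lemma ne[simp]: "{..<n} \<noteq> {}" using n1 lessThan_empty_iff[of n] by linarith

lemma setU[simp]: "set_pmf U = {..<n}" using n1 by (auto simp: U_def)

lemma set_emp: "set_pmf (empirical n f) = f ` {..<n}"
  by (simp add: empirical_def)

lemma exp_emp: "measure_pmf.expectation (empirical n f) g = (\<Sum>k<n. g (f k)) / n"
  using n1 by (simp add: empirical_def integral_pmf_of_set)

lemma fin_emp: "finite (set_pmf (empirical n f))" by (simp add: set_emp)

lemma coupling_fin:
  assumes "\<pi> \<in> couplings (empirical n x) (empirical n y)"
  shows "finite (set_pmf \<pi>)" and "p \<in> set_pmf \<pi> \<Longrightarrow> fst p \<in> x ` {..<n} \<and> snd p \<in> y ` {..<n}"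
proof -
  have 1: "fst ` set_pmf \<pi> = x ` {..<n}" "snd ` set_pmf \<pi> = y ` {..<n}"
  proof -
    have "map_pmf fst \<pi> = empirical n x" "map_pmf snd \<pi> = empirical n y"
      using assms by (auto simp: couplings_def)
    then have "set_pmf (map_pmf fst \<pi>) = x ` {..<n}" "set_pmf (map_pmf snd \<pi>) = y ` {..<n}"
      by (simp_all add: set_emp)
    then show "fst ` set_pmf \<pi> = x ` {..<n}" "snd ` set_pmf \<pi> = y ` {..<n}" by simp_all
  qed
  have "set_pmf \<pi> \<subseteq> x ` {..<n} \<times> y ` {..<n}"
    using 1 by force
  then show "finite (set_pmf \<pi>)" by (rule finite_subset) auto
  show "p \<in> set_pmf \<pi> \<Longrightarrow> fst p \<in> x ` {..<n} \<and> snd p \<in> y ` {..<n}" using 1 by blast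
qed

end


context TT begin

definition "c j k = \<theta> (x j - y k)"
definition "psi k = (\<Sum>m<k. c m m - c m (Suc m))"
definition "phi k = psi k + c k k"

lemma psi_Suc: "psi (Suc k) = psi k + c k k - c k (Suc k)"
  by (simp add: psi_def)

lemma pot1: "j \<le> k \<Longrightarrow> k < n \<Longrightarrow> phi j - psi k \<le> c j k"
proof (induction k)
  case 0 then show ?case by (simp add: phi_def)
next
  case (Suc k)
  show ?case
  proof (cases "j = Suc k")
    case True then show ?thesis by (simp add: phi_def)
  next
    case False
    with Suc.prems have jk: "j \<le> k" "k < n" by auto
    with Suc.IH have ih: "phi j - psi k \<le> c j k" by simp
    have "c j k + c k (Suc k) \<le> c j (Suc k) + c k k"
      unfolding c_def using submod[of "x j" "x k" "y k" "y (Suc k)"] xm[of j k] ym[of k "Suc k"] jk Suc.prems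
      by (simp add: add.commute)
    then show ?thesis using ih by (simp add: psi_Suc)
  qed
qed

lemma pot2: "k \<le> j \<Longrightarrow> j < n \<Longrightarrow> phi j - psi k \<le> c j k"
proof (induction j)
  case 0 then show ?case by (simp add: phi_def)
next
  case (Suc j)
  show ?case
  proof (cases "k = Suc j")
    case True then show ?thesis by (simp add: phi_def)
  next
    case False
    with Suc.prems have jk: "k \<le> j" "j < n" by auto
    with Suc.IH have ih: "phi j - psi k \<le> c j k" by simp
    have "c j k + c (Suc j) (Suc j) \<le> c j (Suc j) + c (Suc j) k"
      unfolding c_def using submod[of "x j" "x (Suc j)" "y k" "y (Suc j)"] xm[of j "Suc j"] ym[of k "Suc j"] jk Suc.prems
      by simp
    then show ?thesis using ih by (simp add: phi_def psi_Suc)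
  qed
qed

lemma pot: "j < n \<Longrightarrow> k < n \<Longrightarrow> phi j - psi k \<le> c j k"
  using pot1 pot2 by (cases "j \<le> k") auto

definition "PhiF a = phi (SOME j. j < n \<and> x j = a)"
definition "PsiF b = psi (SOME k. k < n \<and> y k = b)"

lemma PhiF: assumes "j < n" shows "PhiF (x j) = phi j"
proof -
  define j' where "j' = (SOME j'. j' < n \<and> x j' = x j)"
  have j': "j' < n \<and> x j' = x j" unfolding j'_def by (rule someI[of _ j]) (use assms in auto)
  have "phi j' - psi j \<le> c j' j" "phi j - psi j' \<le> c j j'" using pot j' assms by auto
  moreover have "c j' j = phi j - psi j" "c j j' = phi j' - psi j'"
    using j' by (auto simp: c_def phi_def)
  ultimately show ?thesis unfolding PhiF_def j'_def[symmetric] by linarith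
qed

lemma PsiF: assumes "k < n" shows "PsiF (y k) = psi k"
proof -
  define k' where "k' = (SOME k'. k' < n \<and> y k' = y k)"
  have k': "k' < n \<and> y k' = y k" unfolding k'_def by (rule someI[of _ k]) (use assms in auto)
  have "phi k - psi k' \<le> c k k'" "phi k' - psi k \<le> c k' k" using pot k' assms by auto
  moreover have "c k k' = phi k - psi k" "c k' k = phi k' - psi k'"
    using k' by (auto simp: c_def phi_def)
  ultimately show ?thesis unfolding PsiF_def k'_def[symmetric] by linarith
qed

definition "cl \<pi> = measure_pmf.expectation \<pi> (\<lambda>(a, b). \<theta> \<bar>a - b\<bar>)"
definition "wk \<pi> = measure_pmf.expectation (empirical n x) (\<lambda>a. \<theta> \<bar>a - kernel_bary \<pi> a\<bar>)"

lemma cl_lower: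
  assumes cp: "\<pi> \<in> couplings (empirical n x) (empirical n y)"
  shows "C \<le> cl \<pi>"
proof -
  have fin: "finite (set_pmf \<pi>)" by (rule coupling_fin[OF cp])
  have mf: "map_pmf fst \<pi> = empirical n x" and ms: "map_pmf snd \<pi> = empirical n y"
    using cp by (auto simp: couplings_def)
  have "C = (\<Sum>k<n. phi k) / n - (\<Sum>k<n. psi k) / n"
    by (simp add: C_def phi_def c_def sum.distrib add_divide_distrib)
  also have "\<dots> = measure_pmf.expectation (empirical n x) PhiF - measure_pmf.expectation (empirical n y) PsiF"
    by (simp add: exp_emp PhiF PsiF)
  also have "\<dots> = measure_pmf.expectation \<pi> (\<lambda>p. PhiF (fst p)) - measure_pmf.expectation \<pi> (\<lambda>p. PsiF (snd p))"
    by (simp flip: mf ms)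
  also have "\<dots> = measure_pmf.expectation \<pi> (\<lambda>p. PhiF (fst p) - PsiF (snd p))"
    using Bochner_Integration.integral_diff[OF integrable_measure_pmf_finite[OF fin] integrable_measure_pmf_finite[OF fin],
        of "\<lambda>p. PhiF (fst p)" "\<lambda>p. PsiF (snd p)"] by simp
  also have "\<dots> \<le> cl \<pi>" unfolding cl_def
  proof (rule integral_mono_AE)
    show "AE p in measure_pmf \<pi>. PhiF (fst p) - PsiF (snd p) \<le> (case p of (a, b) \<Rightarrow> \<theta> \<bar>a - b\<bar>)"
      unfolding AE_measure_pmf_iff
    proof
      fix p assume "p \<in> set_pmf \<pi>"
      then obtain j k where jk: "j < n" "k < n" "fst p = x j" "snd p = y k"
        using coupling_fin(2)[OF cp] by blast
      then show "PhiF (fst p) - PsiF (snd p) \<le> (case p of (a, b) \<Rightarrow> \<theta> \<bar>a - b\<bar>)"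
        using pot[of j k] by (cases p) (auto simp: PhiF PsiF c_def)
    qed
  qed (use fin integrable_measure_pmf_finite in auto)
  finally show ?thesis .
qed

definition "Pd \<sigma> \<delta> = map_pmf (\<lambda>(k, b). (x k, if b then y (\<sigma> k) else y k)) (pair_pmf U (bernoulli_pmf \<delta>))"

lemma Pd_exp:
  assumes "0 \<le> \<delta>" "\<delta> \<le> 1"
  shows "measure_pmf.expectation (Pd \<sigma> \<delta>) f
     = (\<Sum>k<n. (1 - \<delta>) * f (x k, y k) + \<delta> * f (x k, y (\<sigma> k))) / n"
proof -
  define g where "g = (\<lambda>(k, b). (x k, if b then y (\<sigma> k) else y k))"
  have "measure_pmf.expectation (Pd \<sigma> \<delta>) f = measure_pmf.expectation (pair_pmf U (bernoulli_pmf \<delta>)) (\<lambda>p. f (g p))"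
    by (simp add: Pd_def g_def)
  also have "\<dots> = (\<Sum>p\<in>{..<n} \<times> UNIV. f (g p) * pmf (pair_pmf U (bernoulli_pmf \<delta>)) p)"
    by (rule integral_measure_pmf_real) auto
  also have "\<dots> = (\<Sum>k<n. \<Sum>b\<in>UNIV. f (g (k, b)) * (pmf U k * pmf (bernoulli_pmf \<delta>) b))"
    by (simp add: sum.cartesian_product) (auto intro!: sum.cong simp: pmf_pair)
  also have "\<dots> = (\<Sum>k<n. ((1 - \<delta>) * f (x k, y k) + \<delta> * f (x k, y (\<sigma> k))) / n)"
    using assms by (intro sum.cong) (auto simp: UNIV_bool g_def U_def field_simps)
  finally show ?thesis by (simp add: sum_divide_distrib)
qed

lemma Pd_coupling:
  assumes perm: "inj_on \<sigma> {..<n}" "\<sigma> ` {..<n} = {..<n}"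
  shows "Pd \<sigma> \<delta> \<in> couplings (empirical n x) (empirical n y)"
proof -
  define B where "B = bernoulli_pmf \<delta>"
  define r where "r = (\<lambda>(k::nat, b::bool). if b then \<sigma> k else k)"
  have "map_pmf fst (Pd \<sigma> \<delta>) = map_pmf (\<lambda>p. x (fst p)) (pair_pmf U B)"
    by (simp add: Pd_def map_pmf_comp case_prod_unfold B_def)
  also have "\<dots> = map_pmf x (map_pmf fst (pair_pmf U B))" by (simp add: map_pmf_comp)
  also have "\<dots> = empirical n x" by (simp add: map_fst_pair_pmf empirical_def U_def)
  finally have 1: "map_pmf fst (Pd \<sigma> \<delta>) = empirical n x" .
  have r: "map_pmf r (pair_pmf U B) = U"
  proof -
    have "map_pmf r (pair_pmf U B) = bind_pmf U (\<lambda>k. bind_pmf B (\<lambda>b. return_pmf (r (k, b))))"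
      by (simp add: pair_pmf_def map_bind_pmf)
    also have "\<dots> = bind_pmf B (\<lambda>b. bind_pmf U (\<lambda>k. return_pmf (r (k, b))))"
      by (rule bind_commute_pmf)
    also have "\<dots> = bind_pmf B (\<lambda>b. map_pmf (\<lambda>k. r (k, b)) U)"
      by (simp add: map_pmf_def)
    also have "\<dots> = bind_pmf B (\<lambda>b. U)"
    proof -
      have "map_pmf (\<lambda>k. r (k, b)) U = U" for b
      proof (cases b)
        case True
        have "map_pmf \<sigma> U = U" unfolding U_def
          by (subst map_pmf_of_set_inj) (use perm in auto)
        then show ?thesis using True by (simp add: r_def)
      qed (simp add: r_def)
      then show ?thesis by simp
    qed
    also have "\<dots> = U" by simp
    finally show ?thesis .
  qed
  have "map_pmf snd (Pd \<sigma> \<delta>) = map_pmf (\<lambda>p. y (r p)) (pair_pmf U B)"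
    unfolding Pd_def map_pmf_comp by (intro map_pmf_cong) (auto simp: r_def B_def split: prod.splits)
  also have "\<dots> = map_pmf y (map_pmf r (pair_pmf U B))" by (simp add: map_pmf_comp)
  also have "\<dots> = empirical n y" by (subst r) (simp add: empirical_def U_def)
  finally show ?thesis using 1 by (simp add: couplings_def)
qed

lemma wk_Pd:
  assumes perm: "inj_on \<sigma> {..<n}" "\<sigma> ` {..<n} = {..<n}" and d: "0 \<le> \<delta>" "\<delta> \<le> 1"
  shows "wk (Pd \<sigma> \<delta>) \<le> (\<Sum>k<n. \<theta> (x k - ((1 - \<delta>) * y k + \<delta> * y (\<sigma> k)))) / n"
proof -
  define \<pi> where "\<pi> = Pd \<sigma> \<delta>"
  define z where "z = kernel_bary \<pi>"
  define \<beta> where "\<beta> a = G (a - z a)" for a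
  define m where "m k = (1 - \<delta>) * y k + \<delta> * y (\<sigma> k)" for k
  have cp: "\<pi> \<in> couplings (empirical n x) (empirical n y)" unfolding \<pi>_def by (rule Pd_coupling[OF perm])
  have fin: "finite (set_pmf \<pi>)" by (rule coupling_fin[OF cp])
  have mf: "map_pmf fst \<pi> = empirical n x" using cp by (auto simp: couplings_def)
  have w: "wk \<pi> = (\<Sum>k<n. \<theta> (x k - z (x k))) / n"
    by (simp add: wk_def exp_emp z_def)
  have "(\<Sum>k<n. \<beta> (x k) * z (x k)) / n = measure_pmf.expectation (empirical n x) (\<lambda>a. \<beta> a * z a)"
    by (simp add: exp_emp)
  also have "\<dots> = measure_pmf.expectation \<pi> (\<lambda>p. \<beta> (fst p) * snd p)"
    unfolding z_def mf[symmetric] by (rule key_identity[OF fin])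
  also have "\<dots> = (\<Sum>k<n. \<beta> (x k) * m k) / n"
    unfolding \<pi>_def using d by (subst Pd_exp) (auto simp: m_def algebra_simps intro!: arg_cong2[where f="(/)"] sum.cong)
  finally have eq: "(\<Sum>k<n. \<beta> (x k) * z (x k)) = (\<Sum>k<n. \<beta> (x k) * m k)"
    using n1 by (simp add: divide_cancel_right)
  have pt: "\<theta> (x k - z (x k)) + \<beta> (x k) * z (x k) - \<beta> (x k) * m k \<le> \<theta> (x k - m k)" for k
    using G_sub[of "x k - z (x k)" "x k - m k"] by (simp add: \<beta>_def algebra_simps)
  have "(\<Sum>k<n. \<theta> (x k - z (x k))) = (\<Sum>k<n. \<theta> (x k - z (x k)) + \<beta> (x k) * z (x k) - \<beta> (x k) * m k)"
    using eq by (simp add: sum.distrib sum_subtractf)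
  also have "\<dots> \<le> (\<Sum>k<n. \<theta> (x k - m k))" by (rule sum_mono[OF pt])
  finally show ?thesis unfolding w[unfolded \<pi>_def] m_def by (simp add: divide_right_mono)
qed


definition "d k = x k - y k"
definition "g k = G (d k)"
definition "cc k = (\<Sum>m<k. g m * (y (Suc m) - y m))"

lemma cc_Suc: "cc (Suc k) = cc k + g k * (y (Suc k) - y k)"
  by (simp add: cc_def)

context
  assumes I: "\<forall>i j. i \<le> j \<longrightarrow> j < n \<longrightarrow> x i - y i \<le> x j - y j"
begin

lemma g_mono: assumes "i \<le> j" "j < n" shows "g i \<le> g j"
proof -
  have "d i \<le> d j" using I assms unfolding d_def by blast
  then show ?thesis unfolding g_def by (rule G_mono)
qed

lemma Q1: "k \<le> j \<Longrightarrow> j < n \<Longrightarrow> cc k + g k * (y j - y k) \<le> cc j"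
proof (induction j)
  case 0 then show ?case by simp
next
  case (Suc j)
  show ?case
  proof (cases "k = Suc j")
    case True then show ?thesis by simp
  next
    case False
    with Suc.prems have jk: "k \<le> j" "j < n" by auto
    with Suc.IH have ih: "cc k + g k * (y j - y k) \<le> cc j" by simp
    have "g k * (y (Suc j) - y j) \<le> g j * (y (Suc j) - y j)"
      using g_mono[of k j] ym[of j "Suc j"] jk Suc.prems by (intro mult_right_mono) auto
    then show ?thesis using ih by (simp add: cc_Suc algebra_simps)
  qed
qed

lemma Q2: "j \<le> k \<Longrightarrow> k < n \<Longrightarrow> cc k + g k * (y j - y k) \<le> cc j"
proof (induction k)
  case 0 then show ?case by simp
next
  case (Suc k)
  show ?case
  proof (cases "j = Suc k")
    case True then show ?thesis by simp
  next
    case False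
    with Suc.prems have jk: "j \<le> k" "k < n" by auto
    with Suc.IH have ih: "cc k + g k * (y j - y k) \<le> cc j" by simp
    have "g (Suc k) * (y j - y (Suc k)) \<le> g k * (y j - y (Suc k))"
      using g_mono[of k "Suc k"] ym[of j "Suc k"] jk Suc.prems by (intro mult_right_mono_neg) auto
    then show ?thesis using ih by (simp add: cc_Suc algebra_simps)
  qed
qed

lemma Q: "j < n \<Longrightarrow> k < n \<Longrightarrow> cc k + g k * (y j - y k) \<le> cc j"
  using Q1 Q2 by (cases "k \<le> j") auto

lemma xwd: assumes "j < n" "k < n" "x j = x k" shows "d j = d k \<and> y j = y k"
proof -
  have *: "d i = d l \<and> y i = y l" if "i \<le> l" "l < n" "x i = x l" for i l
  proof -
    have "x i - y i \<le> x l - y l" using I that by blast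
    moreover have "y i \<le> y l" using ym that by blast
    ultimately have "y i = y l" using that(3) by linarith
    then show ?thesis using that(3) by (simp add: d_def)
  qed
  show ?thesis
  proof (cases "j \<le> k")
    case True then show ?thesis using *[of j k] assms by blast
  next
    case False then have "k \<le> j" by simp
    then show ?thesis using *[of k j] assms by (metis)
  qed
qed

lemma ccwd: assumes "j < n" "k < n" "y j = y k" shows "cc j = cc k"
proof -
  have "cc k + g k * (y j - y k) \<le> cc j" by (rule Q[OF assms(1,2)])
  moreover have "cc j + g j * (y k - y j) \<le> cc k" by (rule Q[OF assms(2,1)])
  ultimately show ?thesis using assms(3) by simp
qed

definition "kx a = (SOME k. k < n \<and> x k = a)"
definition "ky b = (SOME k. k < n \<and> y k = b)"

lemma kx: "j < n \<Longrightarrow> kx (x j) < n \<and> x (kx (x j)) = x j"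
  unfolding kx_def by (rule someI[of _ j]) auto
lemma ky: "j < n \<Longrightarrow> ky (y j) < n \<and> y (ky (y j)) = y j"
  unfolding ky_def by (rule someI[of _ j]) auto

definition "al a = \<theta> (d (kx a)) + g (kx a) * y (kx a)"
definition "be a = g (kx a)"
definition "Phi3 a = \<theta> (d (kx a)) + cc (kx a)"
definition "Psi3 b = cc (ky b)"

lemma Phi3: assumes "j < n" shows "Phi3 (x j) = \<theta> (d j) + cc j"
proof -
  define k where "k = kx (x j)"
  have k: "k < n" "x k = x j" using kx[OF assms] k_def by auto
  have "d k = d j" "y k = y j" using xwd[OF k(1) assms k(2)] by auto
  moreover have "cc k = cc j" using ccwd[OF k(1) assms] \<open>y k = y j\<close> by blast
  ultimately show ?thesis unfolding Phi3_def k_def[symmetric] by simp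
qed
lemma Psi3: assumes "j < n" shows "Psi3 (y j) = cc j"
proof -
  define k where "k = ky (y j)"
  have k: "k < n" "y k = y j" using ky[OF assms] k_def by auto
  have "cc k = cc j" using ccwd[OF k(1) assms k(2)] .
  then show ?thesis unfolding Psi3_def k_def[symmetric] by simp
qed

lemma wk_lower:
  assumes cp: "\<pi> \<in> couplings (empirical n x) (empirical n y)"
  shows "C \<le> wk \<pi>"
proof -
  have fin: "finite (set_pmf \<pi>)" by (rule coupling_fin[OF cp])
  have mf: "map_pmf fst \<pi> = empirical n x" and ms: "map_pmf snd \<pi> = empirical n y"
    using cp by (auto simp: couplings_def)
  have finx: "finite (set_pmf (empirical n x))" by (rule fin_emp)
  note ix = integrable_measure_pmf_finite[OF finx]
  note ip = integrable_measure_pmf_finite[OF fin]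
  have "C = (\<Sum>k<n. Phi3 (x k)) / n - (\<Sum>k<n. Psi3 (y k)) / n"
    by (simp add: C_def Phi3 Psi3 d_def sum.distrib add_divide_distrib)
  also have "\<dots> = measure_pmf.expectation (empirical n x) Phi3 - measure_pmf.expectation (empirical n y) Psi3"
    by (simp add: exp_emp)
  also have "\<dots> = measure_pmf.expectation \<pi> (\<lambda>p. Phi3 (fst p)) - measure_pmf.expectation \<pi> (\<lambda>p. Psi3 (snd p))"
    by (simp flip: mf ms)
  also have "\<dots> = measure_pmf.expectation \<pi> (\<lambda>p. Phi3 (fst p) - Psi3 (snd p))"
    using Bochner_Integration.integral_diff[OF ip ip,
        of "\<lambda>p. Phi3 (fst p)" "\<lambda>p. Psi3 (snd p)"] by simp
  also have "\<dots> \<le> measure_pmf.expectation \<pi> (\<lambda>p. al (fst p) - be (fst p) * snd p)"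
  proof (rule integral_mono_AE)
    show "AE p in measure_pmf \<pi>. Phi3 (fst p) - Psi3 (snd p) \<le> al (fst p) - be (fst p) * snd p"
      unfolding AE_measure_pmf_iff
    proof
      fix p assume "p \<in> set_pmf \<pi>"
      then obtain j k where jk: "j < n" "k < n" "fst p = x j" "snd p = y k"
        using coupling_fin(2)[OF cp] by blast
      define j' where "j' = kx (x j)"
      have j': "j' < n" "x j' = x j" using kx[OF jk(1)] j'_def by auto
      have "cc j' + g j' * (y k - y j') \<le> cc k" by (rule Q[OF jk(2) j'(1)])
      then show "Phi3 (fst p) - Psi3 (snd p) \<le> al (fst p) - be (fst p) * snd p"
        using jk Psi3[OF jk(2)] by (simp add: Phi3_def al_def be_def j'_def[symmetric] algebra_simps)
    qed
  qed (use ip in auto)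
  also have "\<dots> = measure_pmf.expectation \<pi> (\<lambda>p. al (fst p)) - measure_pmf.expectation \<pi> (\<lambda>p. be (fst p) * snd p)"
    using Bochner_Integration.integral_diff[OF ip ip,
        of "\<lambda>p. al (fst p)" "\<lambda>p. be (fst p) * snd p"] by simp
  also have "\<dots> = measure_pmf.expectation (empirical n x) al - measure_pmf.expectation (empirical n x) (\<lambda>a. be a * kernel_bary \<pi> a)"
    using key_identity[OF fin, of be] by (simp flip: mf)
  also have "\<dots> = measure_pmf.expectation (empirical n x) (\<lambda>a. al a - be a * kernel_bary \<pi> a)"
    using Bochner_Integration.integral_diff[OF ix ix,
        of al "\<lambda>a. be a * kernel_bary \<pi> a"] by simp
  also have "\<dots> \<le> wk \<pi>" unfolding wk_def
  proof (rule integral_mono_AE)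
    show "AE a in measure_pmf (empirical n x). al a - be a * kernel_bary \<pi> a \<le> \<theta> \<bar>a - kernel_bary \<pi> a\<bar>"
      unfolding AE_measure_pmf_iff set_emp
    proof
      fix a assume "a \<in> x ` {..<n}"
      then obtain j where j: "j < n" "a = x j" by auto
      define k where "k = kx a"
      have k: "k < n" "x k = a" using kx[OF j(1)] j k_def by auto
      have "\<theta> (d k) + G (d k) * ((a - kernel_bary \<pi> a) - d k) \<le> \<theta> (a - kernel_bary \<pi> a)" by (rule G_sub)
      then show "al a - be a * kernel_bary \<pi> a \<le> \<theta> \<bar>a - kernel_bary \<pi> a\<bar>"
        using k by (simp add: al_def be_def g_def d_def k_def[symmetric] algebra_simps)
    qed
  qed (use ix in auto)
  finally show ?thesis .
qed

end



lemma wk_nonneg: "0 \<le> wk \<pi>"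
  unfolding wk_def by (rule integral_nonneg_AE) (simp add: th_nonneg)

lemma cl0: "cl (Pd id 0) = C"
  by (simp add: cl_def Pd_exp C_def)

lemma wk0: "wk (Pd id 0) \<le> C"
  using wk_Pd[of id 0] by (simp add: C_def)

lemma cp0: "Pd id 0 \<in> couplings (empirical n x) (empirical n y)"
  by (rule Pd_coupling) auto

lemma Tval: "Inf (cl ` couplings (empirical n x) (empirical n y)) = C"
proof (rule antisym)
  have "Inf (cl ` couplings (empirical n x) (empirical n y)) \<le> cl (Pd id 0)"
    by (rule cInf_lower) (use cp0 cl_lower in \<open>auto intro!: bdd_belowI[where m=C]\<close>)
  then show "Inf (cl ` couplings (empirical n x) (empirical n y)) \<le> C" by (simp add: cl0)
  show "C \<le> Inf (cl ` couplings (empirical n x) (empirical n y))"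
    by (rule cInf_greatest) (use cp0 cl_lower in auto)
qed

lemma Wle: "\<pi> \<in> couplings (empirical n x) (empirical n y) \<Longrightarrow> Inf (wk ` couplings (empirical n x) (empirical n y)) \<le> wk \<pi>"
  by (rule cInf_lower) (auto intro!: bdd_belowI[where m=0] wk_nonneg)

lemma not_I:
  assumes "i \<le> j" "j < n" "x i - y i > x j - y j"
  shows "Inf (wk ` couplings (empirical n x) (empirical n y)) < C"
proof -
  define di where "di = x i - y i"
  define dj where "dj = x j - y j"
  define D where "D = y j - y i"
  have ij: "i < j" using assms by (cases "i = j") auto
  have "x i \<le> x j" using xm assms by blast
  then have Dpos: "D > 0" and le: "di - dj \<le> D" using assms by (auto simp: di_def dj_def D_def)
  define \<delta> where "\<delta> = (di - dj) / (2 * D)"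
  have dpos: "0 < \<delta>" using Dpos assms by (simp add: \<delta>_def di_def dj_def)
  have dle: "\<delta> \<le> 1" using Dpos le by (simp add: \<delta>_def field_simps)
  have dD: "\<delta> * D = (di - dj) / 2" using Dpos by (simp add: \<delta>_def)
  define \<sigma> where "\<sigma> k = (if k = i then j else if k = j then i else k)" for k
  have inj: "inj_on \<sigma> {..<n}" by (auto simp: inj_on_def \<sigma>_def split: if_splits)
  have img: "\<sigma> ` {..<n} = {..<n}"
  proof
    show "\<sigma> ` {..<n} \<subseteq> {..<n}" using assms ij by (auto simp: \<sigma>_def)
    show "{..<n} \<subseteq> \<sigma> ` {..<n}"
    proof
      fix k assume k: "k \<in> {..<n}"
      have "\<sigma> (\<sigma> k) = k" "\<sigma> k \<in> {..<n}" using k assms ij by (auto simp: \<sigma>_def)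
      then show "k \<in> \<sigma> ` {..<n}" by (metis imageI)
    qed
  qed
  define m where "m k = (1 - \<delta>) * y k + \<delta> * y (\<sigma> k)" for k
  define F where "F k = \<theta> (x k - m k) - \<theta> (x k - y k)" for k
  have F0: "k \<notin> {i, j} \<Longrightarrow> F k = 0" for k by (simp add: F_def m_def \<sigma>_def algebra_simps)
  have mi: "x i - m i = (1 - 1/2) * dj + (1/2) * di"
  proof -
    have "m i = y i + \<delta> * D" by (simp add: m_def \<sigma>_def D_def algebra_simps)
    then have e: "m i = y i + (di - dj) / 2" using dD by simp
    show ?thesis using e by (simp add: di_def dj_def field_simps)
  qed
  have mj: "x j - m j = (1 - 1/2) * dj + (1/2) * di"
  proof -
    have "m j = y j - \<delta> * D" using ij by (simp add: m_def \<sigma>_def D_def algebra_simps)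
    then have e: "m j = y j - (di - dj) / 2" using dD by simp
    show ?thesis using e by (simp add: di_def dj_def field_simps)
  qed
  have strict: "\<theta> ((1 - 1/2) * dj + (1/2) * di) < (1 - 1/2) * \<theta> dj + (1/2) * \<theta> di"
  proof -
    have "dj \<noteq> di" using assms by (simp add: di_def dj_def)
    moreover have "(0::real) < 1/2" "(1/2::real) < 1" by simp_all
    ultimately show ?thesis using sc unfolding strictly_convex_def by blast
  qed
  have "(\<Sum>k<n. F k) = (\<Sum>k\<in>{i, j}. F k) + (\<Sum>k\<in>{..<n} - {i, j}. F k)"
    using assms by (subst sum.subset_diff[of "{i,j}"]) auto
  also have "(\<Sum>k\<in>{..<n} - {i, j}. F k) = 0" using F0 by (intro sum.neutral) auto
  also have "(\<Sum>k\<in>{i, j}. F k) = F i + F j" using ij by simp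
  also have "F i + F j < 0"
    using strict mi mj by (simp add: F_def di_def dj_def)
  finally have "(\<Sum>k<n. F k) < 0" by simp
  then have lt: "(\<Sum>k<n. \<theta> (x k - m k)) < (\<Sum>k<n. \<theta> (x k - y k))"
    by (simp add: F_def sum_subtractf)
  have "Inf (wk ` couplings (empirical n x) (empirical n y)) \<le> wk (Pd \<sigma> \<delta>)"
    by (rule Wle[OF Pd_coupling[OF inj img]])
  also have "\<dots> \<le> (\<Sum>k<n. \<theta> (x k - m k)) / n"
    using wk_Pd[OF inj img] dpos dle by (simp add: m_def)
  also have "\<dots> < C" unfolding C_def using lt n1 by (simp add: divide_strict_right_mono)
  finally show ?thesis .
qed

end

theorem theorem2p7:
  fixes n :: nat and x y :: "nat \<Rightarrow> real" and \<theta> :: "real \<Rightarrow> real"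
  assumes "n \<ge> 1"
    and "\<And>i j. i \<le> j \<Longrightarrow> j < n \<Longrightarrow> x i \<le> x j"
    and "\<And>i j. i \<le> j \<Longrightarrow> j < n \<Longrightarrow> y i \<le> y j"
    and "cost_function \<theta>" and "strictly_convex \<theta>"
  shows "(\<forall>i j. i \<le> j \<longrightarrow> j < n \<longrightarrow> x i - y i \<le> x j - y j) \<longleftrightarrow>
         weak_cost \<theta> (empirical n y) (empirical n x) = transport_cost \<theta> (empirical n y) (empirical n x)"
proof -
  interpret TT n x y \<theta> using assms by unfold_locales
  have W: "weak_cost \<theta> (empirical n y) (empirical n x) = Inf (wk ` couplings (empirical n x) (empirical n y))"
    by (simp add: weak_cost_def wk_def[abs_def])
  have T: "transport_cost \<theta> (empirical n y) (empirical n x) = C"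
    using Tval by (simp add: transport_cost_def cl_def[abs_def])
  show ?thesis
  proof
    assume I: "\<forall>i j. i \<le> j \<longrightarrow> j < n \<longrightarrow> x i - y i \<le> x j - y j"
    have "Inf (wk ` couplings (empirical n x) (empirical n y)) = C"
    proof (rule antisym)
      show "Inf (wk ` couplings (empirical n x) (empirical n y)) \<le> C"
        using Wle[OF cp0] wk0 by linarith
      show "C \<le> Inf (wk ` couplings (empirical n x) (empirical n y))"
        by (rule cInf_greatest) (use cp0 wk_lower[OF I] in auto)
    qed
    then show "weak_cost \<theta> (empirical n y) (empirical n x) = transport_cost \<theta> (empirical n y) (empirical n x)"
      using W T by simp
  next
    assume eq: "weak_cost \<theta> (empirical n y) (empirical n x) = transport_cost \<theta> (empirical n y) (empirical n x)"
    show "\<forall>i j. i \<le> j \<longrightarrow> j < n \<longrightarrow> x i - y i \<le> x j - y j"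
    proof (rule ccontr)
      assume "\<not> ?thesis"
      then obtain i j where "i \<le> j" "j < n" "x i - y i > x j - y j" by (auto simp: not_le)
      from not_I[OF this] eq W T show False by simp
    qed
  qed
qed

end
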